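(* If (a) $\mathrm{Sol}(0)$ is a singleton and (b) $X^\infty\cap\mathcal{K}(f)=\{0\}$, then the set-valued map $\mathrm{Sol}(\cdot)$ is lower semicontinuous at $0$. Conversely, if $\mathrm{Sol}(\cdot)$ is lower semicontinuous at $0$, then (a) holds; and if in addition $X$ and $f$ are convex, then (b) holds as well.
   Context: Standing assumptions: $f:\mathbb{R}^n\to\mathbb{R}\cup\{\pm\infty\}$ is proper (never $-\infty$ and finite at some point) and lower semicontinuous; $X\subset\mathbb{R}^n$ is a nonempty closed set with $\operatorname{dom}f\cap X$ unbounded. $X^\infty=\{u:\exists t_k\to+\infty,\ \exists x_k\in X,\ x_k/t_k\to u\}$; $f^\infty(d)=\inf\{\liminf_{k} f(t_kd_k)/t_k:\ t_k\to+\infty,\ d_k\to d\}$; $\mathcal{K}(f)=\{d: f^\infty(d)\le 0\}$. For $u\in\mathbb{R}^n$, $f_u(x)=f(x)-\langle u,x\rangle$ and $\mathrm{Sol}(u)=\{x\in X: f_u(x)\le f_u(y)\ \forall y\in X\}$. A set-valued map $F$ is lower semicontinuous at $\bar u$ if $F(\bar u)\ne\emptyset$ and for every open $V$ with $F(\bar u)\cap V\ne\emptyset$ there is a neighborhood $U$ of $\bar u$ with $F(u)\cap V\neq\emptyset$ for all $u\in U$. *)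

theory Defs
  imports "HOL-Analysis.Analysis"
begin

definition proper_fun :: "('a \<Rightarrow> ereal) \<Rightarrow> bool" where
  "proper_fun f \<longleftrightarrow> (\<forall>x. f x \<noteq> -\<infinity>) \<and> (\<exists>x. f x \<noteq> \<infinity>)"

definition lsc_fun :: "('a::topological_space \<Rightarrow> ereal) \<Rightarrow> bool" where
  "lsc_fun f \<longleftrightarrow> (\<forall>a. closed {x. f x \<le> a})"

definition edom :: "('a \<Rightarrow> ereal) \<Rightarrow> 'a set" where
  "edom f = {x. f x < \<infinity>}"

definition convex_efun :: "('a::real_vector \<Rightarrow> ereal) \<Rightarrow> bool" where
  "convex_efun f \<longleftrightarrow> convex {(x, t::real). f x \<le> ereal t}"

definition asym_cone :: "'a::real_normed_vector set \<Rightarrow> 'a set" where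
  "asym_cone X = {u. \<exists>t x. filterlim t at_top sequentially \<and> (\<forall>k. x k \<in> X)
                       \<and> (\<lambda>k. (1 / t k) *\<^sub>R x k) \<longlonglongrightarrow> u}"

definition asym_fun :: "('a::real_normed_vector \<Rightarrow> ereal) \<Rightarrow> 'a \<Rightarrow> ereal" where
  "asym_fun f d = Inf {liminf (\<lambda>k. f (t k *\<^sub>R e k) / ereal (t k)) | t e.
                        filterlim t at_top sequentially \<and> e \<longlonglongrightarrow> d}"

definition Kf :: "('a::real_normed_vector \<Rightarrow> ereal) \<Rightarrow> 'a set" where
  "Kf f = {d. asym_fun f d \<le> 0}"

definition tilt :: "('a::real_inner \<Rightarrow> ereal) \<Rightarrow> 'a \<Rightarrow> 'a \<Rightarrow> ereal" where
  "tilt f u x = f x - ereal (inner u x)"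

definition Sol :: "('a::real_inner \<Rightarrow> ereal) \<Rightarrow> 'a set \<Rightarrow> 'a \<Rightarrow> 'a set" where
  "Sol f X u = {x \<in> X. \<forall>y\<in>X. tilt f u x \<le> tilt f u y}"

definition lsc_setmap :: "('a::topological_space \<Rightarrow> 'b::topological_space set) \<Rightarrow> 'a \<Rightarrow> bool" where
  "lsc_setmap F u0 \<longleftrightarrow> F u0 \<noteq> {} \<and>
     (\<forall>V. open V \<and> F u0 \<inter> V \<noteq> {} \<longrightarrow>
        (\<exists>U. open U \<and> u0 \<in> U \<and> (\<forall>u\<in>U. F u \<inter> V \<noteq> {})))"

end

theory Submission
  imports Defs
begin


lemma tilt0[simp]: "tilt f 0 x = f x" by (simp add: tilt_def)

lemma lsc_ev:
  assumes "lsc_fun f" "(x \<longlongrightarrow> z) F" "a < f z"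
  shows "eventually (\<lambda>k. a < f (x k)) F"
proof -
  have "open {y. a < f y}"
  proof -
    have "{y. a < f y} = - {y. f y \<le> a}" by auto
    thus ?thesis using assms(1) unfolding lsc_fun_def by (simp add: open_Compl)
  qed
  from topological_tendstoD[OF assms(2) this] assms(3) show ?thesis by simp
qed

lemma lsc_tilt_ev:
  assumes "lsc_fun f" "\<forall>x. f x \<noteq> -\<infinity>" "(x \<longlongrightarrow> z) F" "a < tilt f u z"
  shows "eventually (\<lambda>k. a < tilt f u (x k)) F"
proof (cases a)
  case MInf
  have "\<And>y. -\<infinity> < tilt f u y"
  proof -
    fix y show "-\<infinity> < tilt f u y" using assms(2)[rule_format, of y]
      by (cases "f y") (auto simp: tilt_def)
  qed
  then show ?thesis using MInf by (auto intro!: always_eventually)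
next
  case PInf
  then show ?thesis using assms(4) by simp
next
  case (real r)
  have "ereal (r + u \<bullet> z) < f z" using assms(4) real
    by (cases "f z") (auto simp: tilt_def)
  then obtain s where s1: "r + u \<bullet> z < s" and s2: "ereal s < f z"
    by (metis ereal_dense2 ereal_less(2) order_less_trans less_ereal.simps(1) ereal_less_eq(3))
  have e1: "eventually (\<lambda>k. ereal s < f (x k)) F" using lsc_ev[OF assms(1) assms(3) s2] .
  have "((\<lambda>k. u \<bullet> x k) \<longlongrightarrow> u \<bullet> z) F" using assms(3) by (intro tendsto_intros)
  hence e2: "eventually (\<lambda>k. u \<bullet> x k < s - r) F"
    using s1 by (intro order_tendstoD) auto
  show ?thesis using e1 e2
  proof eventually_elim
    case (elim k)
    then show ?case using real by (cases "f (x k)") (auto simp: tilt_def)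
  qed
qed



lemma lsc_min_exists:
  fixes g :: "'a::topological_space \<Rightarrow> ereal"
  assumes K: "compact K" "K \<noteq> {}"
    and ev: "\<And>a z. a < g z \<Longrightarrow> eventually (\<lambda>y. a < g y) (nhds z)"
  shows "\<exists>z\<in>K. \<forall>y\<in>K. g z \<le> g y"
proof (rule ccontr)
  assume H: "\<not> ?thesis"
  define I where "I = Inf (g ` K)"
  have lt: "\<forall>z\<in>K. I < g z"
  proof
    fix z assume "z \<in> K"
    then obtain y where "y \<in> K" "g y < g z" using H by (auto simp: not_le)
    moreover have "I \<le> g y" using \<open>y \<in> K\<close> unfolding I_def by (rule INF_lower)
    ultimately show "I < g z" by simp
  qed
  have opn: "open {y. a < g y}" for a
    unfolding open_subopen[of "{y. a < g y}"]
  proof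
    fix z assume "z \<in> {y. a < g y}"
    then have "eventually (\<lambda>y. a < g y) (nhds z)" using ev by simp
    then show "\<exists>T. open T \<and> z \<in> T \<and> T \<subseteq> {y. a < g y}"
      unfolding eventually_nhds by auto
  qed
  have cov: "K \<subseteq> (\<Union>a\<in>{a. I < a}. {y. a < g y})"
  proof
    fix z assume "z \<in> K"
    then have "I < g z" using lt by auto
    then obtain a where "I < a" "a < g z" using dense by blast
    then show "z \<in> (\<Union>a\<in>{a. I < a}. {y. a < g y})" by auto
  qed
  obtain C where C: "C \<subseteq> {a. I < a}" "finite C" "K \<subseteq> (\<Union>a\<in>C. {y. a < g y})"
    using compactE_image[OF K(1) opn cov] by blast
  have "C \<noteq> {}" using C(3) K(2) by auto
  define a0 where "a0 = Min C"
  have "a0 \<in> C" using \<open>C \<noteq> {}\<close> C(2) unfolding a0_def by simp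
  hence "I < a0" using C(1) by auto
  then obtain z where z: "z \<in> K" "g z < a0" unfolding I_def by (auto simp: INF_less_iff)
  then obtain a where "a \<in> C" "a < g z" using C(3) by auto
  moreover have "a0 \<le> a" using \<open>a \<in> C\<close> C(2) unfolding a0_def by simp
  ultimately show False using z by simp
qed





lemma sol0_props:
  assumes "proper_fun f" "\<not> bounded (edom f \<inter> X)" "x \<in> Sol f X 0"
  shows "\<exists>m. f x = ereal m" "x \<in> X" "\<forall>y\<in>X. f x \<le> f y"
proof -
  show xX: "x \<in> X" "\<forall>y\<in>X. f x \<le> f y" using assms(3) by (auto simp: Sol_def)
  have "edom f \<inter> X \<noteq> {}" using assms(2) by auto
  then obtain y where "y \<in> X" "f y < \<infinity>" by (auto simp: edom_def)
  hence "f x < \<infinity>" using xX(2) by (meson order_le_less_trans)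
  moreover have "f x \<noteq> -\<infinity>" using assms(1) by (auto simp: proper_fun_def)
  ultimately show "\<exists>m. f x = ereal m" by (cases "f x") auto
qed

lemma ereal_aux: "fz - ereal a \<le> ereal m - ereal b \<Longrightarrow> ereal m \<le> fz \<Longrightarrow> b \<le> a"
  by (cases fz) auto

lemma part2:
  fixes f :: "'a::euclidean_space \<Rightarrow> ereal"
  assumes P: "proper_fun f" "\<not> bounded (edom f \<inter> X)"
    and L: "lsc_setmap (Sol f X) 0"
  shows "\<exists>x. Sol f X 0 = {x}"
proof -
  obtain x1 where x1: "x1 \<in> Sol f X 0" using L by (auto simp: lsc_setmap_def)
  obtain m where m: "f x1 = ereal m" using sol0_props[OF P x1] by blast
  have "x2 = x1" if x2: "x2 \<in> Sol f X 0" for x2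
  proof (rule ccontr)
    assume ne: "x2 \<noteq> x1"
    define w where "w = x2 - x1"
    define nw where "nw = norm w"
    have nwpos: "nw > 0" using ne unfolding nw_def w_def by simp
    define r where "r = nw / 2"
    have "open (ball x1 r)" "Sol f X 0 \<inter> ball x1 r \<noteq> {}"
      using x1 nwpos unfolding r_def by auto
    then obtain U where U: "open U" "0 \<in> U" "\<forall>u\<in>U. Sol f X u \<inter> ball x1 r \<noteq> {}"
      using L unfolding lsc_setmap_def by blast
    obtain e where e: "e > 0" "ball 0 e \<subseteq> U" using U(1,2) open_contains_ball by blast
    define c where "c = e / (2 * nw)"
    have cpos: "c > 0" using e nwpos unfolding c_def by simp
    define u where "u = c *\<^sub>R w"
    have "norm u = e / 2" unfolding u_def c_def using nwpos e by (simp add: nw_def)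
    hence "u \<in> U" using e by auto
    then obtain z where z: "z \<in> Sol f X u" "z \<in> ball x1 r" using U(3) by blast
    have zX: "z \<in> X" using z by (auto simp: Sol_def)
    have x2X: "x2 \<in> X" using x2 by (auto simp: Sol_def)
    have A: "tilt f u z \<le> tilt f u x2" using z x2X by (auto simp: Sol_def)
    have fx2: "f x2 = ereal m"
    proof -
      have "f x1 \<le> f x2" using sol0_props(3)[OF P x1] x2X by blast
      moreover have "f x2 \<le> f x1" using sol0_props(3)[OF P x2] sol0_props(2)[OF P x1] by blast
      ultimately show ?thesis using m by simp
    qed
    have B: "ereal m \<le> f z" using sol0_props(3)[OF P x1] zX m by auto
    have "u \<bullet> x2 \<le> u \<bullet> z"
      using ereal_aux[of "f z" "u \<bullet> z" m "u \<bullet> x2"] A B fx2 by (simp add: tilt_def)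
    hence le: "w \<bullet> x2 \<le> w \<bullet> z" using cpos unfolding u_def by simp
    have "w \<bullet> (z - x1) \<le> nw * norm (z - x1)" unfolding nw_def by (rule Cauchy_Schwarz_ineq2[THEN order_trans[OF abs_ge_self]])
    moreover have "norm (z - x1) < r" using z(2) by (simp add: dist_norm norm_minus_commute)
    moreover have "nw * norm (z - x1) < nw * r"
      using \<open>norm (z - x1) < r\<close> nwpos by (rule mult_strict_left_mono)
    ultimately have "w \<bullet> (z - x1) < nw * r" by linarith
    moreover have "w \<bullet> (x2 - x1) = nw * nw" unfolding w_def nw_def
      by (simp add: power2_norm_eq_inner[symmetric] power2_eq_square)
    ultimately have "w \<bullet> z - w \<bullet> x1 < nw * nw / 2" "w \<bullet> x2 - w \<bullet> x1 = nw * nw"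
      unfolding r_def by (simp_all add: inner_diff_right)
    moreover have "nw * nw > 0" using nwpos by simp
    ultimately show False using le by linarith
  qed
  thus ?thesis using x1 by blast
qed



lemma zero_asym: "X \<noteq> {} \<Longrightarrow> (0::'a::real_normed_vector) \<in> asym_cone X"
proof -
  assume "X \<noteq> {}" then obtain x0 where "x0 \<in> X" by auto
  have "(\<lambda>k. (1 / real k) *\<^sub>R x0) \<longlonglongrightarrow> 0"
    using tendsto_scaleR[OF lim_1_over_n tendsto_const[of x0]] by simp
  thus ?thesis unfolding asym_cone_def using \<open>x0 \<in> X\<close> filterlim_real_sequentially
    by (intro CollectI exI[of _ "\<lambda>k. real k"] exI[of _ "\<lambda>k. x0"]) auto
qed

lemma zero_Kf:
  fixes f :: "'a::real_normed_vector \<Rightarrow> ereal"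
  assumes "proper_fun f" shows "0 \<in> Kf f"
proof -
  obtain y where y: "f y \<noteq> \<infinity>" using assms by (auto simp: proper_fun_def)
  moreover have "f y \<noteq> -\<infinity>" using assms by (auto simp: proper_fun_def)
  ultimately obtain c where c: "f y = ereal c" by (cases "f y") auto
  define e where "e = (\<lambda>k. (1 / real k) *\<^sub>R y)"
  have e: "e \<longlonglongrightarrow> 0" unfolding e_def
    using tendsto_scaleR[OF lim_1_over_n tendsto_const[of y]] by simp
  have ev: "eventually (\<lambda>k. ereal (c * (1 / real k)) = f (real k *\<^sub>R e k) / ereal (real k)) sequentially"
    using eventually_gt_at_top[of "0::nat"]
  proof eventually_elim
    case (elim k)
    then show ?case by (simp add: e_def c)
  qed
  have "((\<lambda>k. ereal (c * (1 / real k))) \<longlongrightarrow> ereal (c * 0)) sequentially"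
    by (intro tendsto_intros lim_1_over_n)
  hence lim: "((\<lambda>k. f (real k *\<^sub>R e k) / ereal (real k)) \<longlongrightarrow> 0) sequentially"
    using Lim_transform_eventually[OF _ ev] by (simp add: zero_ereal_def)
  have "liminf (\<lambda>k. f (real k *\<^sub>R e k) / ereal (real k)) = 0"
    using lim_imp_Liminf[OF _ lim] by simp
  hence "asym_fun f 0 \<le> 0" unfolding asym_fun_def
    using filterlim_real_sequentially e
    by (intro Inf_lower2[of 0]) (auto intro!: exI[of _ "\<lambda>k. real k"] exI[of _ e])
  thus ?thesis by (simp add: Kf_def)
qed

lemma rec_X:
  fixes X :: "'a::real_normed_vector set"
  assumes "convex X" "closed X" "xb \<in> X" "d \<in> asym_cone X"
  shows "xb + d \<in> X"
proof -
  obtain t x where t: "filterlim t at_top sequentially" and x: "\<forall>k. x k \<in> X"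
    and lim: "(\<lambda>k. (1 / t k) *\<^sub>R x k) \<longlonglongrightarrow> d"
    using assms(4) unfolding asym_cone_def by blast
  have inv: "(\<lambda>k. 1 / t k) \<longlonglongrightarrow> 0"
    using tendsto_inverse_0_at_top[OF t] by (simp add: divide_inverse)
  define p where "p = (\<lambda>k. (1 - 1 / t k) *\<^sub>R xb + (1 / t k) *\<^sub>R x k)"
  have "p \<longlonglongrightarrow> (1 - 0) *\<^sub>R xb + d" unfolding p_def
    by (intro tendsto_intros inv lim)
  hence pl: "p \<longlonglongrightarrow> xb + d" by simp
  have "eventually (\<lambda>k. t k \<ge> 1) sequentially" using t by (simp add: filterlim_at_top)
  hence "eventually (\<lambda>k. p k \<in> X) sequentially"
  proof eventually_elim
    case (elim k)
    then show ?case unfolding p_def using assms(1,3) x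
      by (intro convexD) auto
  qed
  thus ?thesis using Lim_in_closed_set[OF assms(2) _ _ pl] by simp
qed

lemma conv_ineq:
  assumes "convex_efun f" "f a \<le> ereal \<alpha>" "f b \<le> ereal \<beta>" "0 \<le> l" "l \<le> 1"
  shows "f ((1 - l) *\<^sub>R a + l *\<^sub>R b) \<le> ereal ((1 - l) * \<alpha> + l * \<beta>)"
proof -
  let ?E = "{(x, t::real). f x \<le> ereal t}"
  have "(1 - l) *\<^sub>R (a, \<alpha>) + l *\<^sub>R (b, \<beta>) \<in> ?E"
    using assms unfolding convex_efun_def by (intro convexD) auto
  thus ?thesis by simp
qed


lemma frequently_lt_of_liminf:
  fixes g :: "nat \<Rightarrow> ereal"
  assumes "liminf g < c" shows "frequently (\<lambda>k. g k < c) sequentially"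
proof -
  from assms have "\<not> c \<le> liminf g" by simp
  then obtain y where "y < c" "\<not> eventually (\<lambda>k. y < g k) sequentially"
    unfolding le_Liminf_iff by blast
  hence "frequently (\<lambda>k. g k \<le> y) sequentially"
    by (simp add: not_eventually not_less)
  from this show ?thesis by (rule frequently_elim1) (use \<open>y < c\<close> in auto)
qed

lemma rec_f:
  fixes f :: "'a::real_normed_vector \<Rightarrow> ereal"
  assumes cf: "convex_efun f" and lf: "lsc_fun f" and pf: "proper_fun f"
    and m: "f xb = ereal m" and d: "d \<in> Kf f"
  shows "f (xb + d) \<le> ereal m"
proof (rule ereal_le_epsilon2)
  fix \<epsilon> :: real assume ep: "0 < \<epsilon>"
  have "asym_fun f d < ereal (\<epsilon>/2)" using d ep by (simp add: Kf_def) (metis order_le_less_trans ereal_less(2) half_gt_zero zero_ereal_def)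
  then obtain t e where t: "filterlim t at_top sequentially" and e: "e \<longlonglongrightarrow> d"
    and li: "liminf (\<lambda>k. f (t k *\<^sub>R e k) / ereal (t k)) < ereal (\<epsilon>/2)"
    unfolding asym_fun_def Inf_less_iff by blast
  have fr: "frequently (\<lambda>k. f (t k *\<^sub>R e k) / ereal (t k) < ereal (\<epsilon>/2)) sequentially"
    using frequently_lt_of_liminf[OF li] .
  have inv: "(\<lambda>k. 1 / t k) \<longlonglongrightarrow> 0"
    using tendsto_inverse_0_at_top[OF t] by (simp add: divide_inverse)
  define q where "q = (\<lambda>k. (1 - 1 / t k) *\<^sub>R xb + e k)"
  have "q \<longlonglongrightarrow> (1 - 0) *\<^sub>R xb + d" unfolding q_def
    by (intro tendsto_intros inv e)
  hence ql: "q \<longlonglongrightarrow> xb + d" by simp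
  have ev1: "eventually (\<lambda>k. t k \<ge> 1) sequentially" using t by (simp add: filterlim_at_top)
  have "((\<lambda>k. \<bar>m\<bar> * (1 / t k)) \<longlonglongrightarrow> \<bar>m\<bar> * 0)" by (intro tendsto_intros inv)
  hence ev2: "eventually (\<lambda>k. \<bar>m\<bar> * (1 / t k) < \<epsilon>/2) sequentially"
    using ep by (intro order_tendstoD) auto
  have fr2: "frequently (\<lambda>k. f (q k) \<le> ereal (m + \<epsilon>)) sequentially"
  proof -
    have "frequently (\<lambda>k. f (t k *\<^sub>R e k) / ereal (t k) < ereal (\<epsilon>/2) \<and>
           (t k \<ge> 1 \<and> \<bar>m\<bar> * (1 / t k) < \<epsilon>/2)) sequentially"
      using frequently_eventually_frequently[OF fr eventually_conj[OF ev1 ev2]] .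
    thus ?thesis
    proof (rule frequently_elim1)
      fix k assume H: "f (t k *\<^sub>R e k) / ereal (t k) < ereal (\<epsilon>/2) \<and>
           (t k \<ge> 1 \<and> \<bar>m\<bar> * (1 / t k) < \<epsilon>/2)"
      define T where "T = t k"
      have T1: "T \<ge> 1" using H T_def by simp
      have fne: "f (T *\<^sub>R e k) \<noteq> -\<infinity>" using pf by (auto simp: proper_fun_def)
      have fni: "f (T *\<^sub>R e k) \<noteq> \<infinity>"
      proof
        assume "f (T *\<^sub>R e k) = \<infinity>"
        hence "f (T *\<^sub>R e k) / ereal T = \<infinity>" using T1 by simp
        thus False using H T_def by simp
      qed
      obtain r where r: "f (T *\<^sub>R e k) = ereal r" using fne fni by (cases "f (T *\<^sub>R e k)") auto
      have "ereal (r / T) < ereal (\<epsilon>/2)" using H r T1 unfolding T_def[symmetric] by simp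
      hence rl: "r / T < \<epsilon>/2" by simp
      have qk: "q k = (1 - 1 / T) *\<^sub>R xb + (1 / T) *\<^sub>R (T *\<^sub>R e k)"
        using T1 unfolding q_def T_def by simp
      have "f (q k) \<le> ereal ((1 - 1/T) * m + (1/T) * r)"
        unfolding qk using T1 m r
        by (intro conv_ineq[OF cf]) (auto simp: field_simps)
      moreover have "(1 - 1/T) * m + (1/T) * r \<le> m + \<epsilon>"
      proof -
        have "\<bar>m\<bar> * (1 / T) < \<epsilon>/2" using H T_def by simp
        moreover have "- m * (1/T) \<le> \<bar>m\<bar> * (1/T)" using T1 by (intro mult_right_mono) auto
        moreover have "(1/T) * r = r / T" by simp
        moreover have "(1 - 1/T) * m = m - m * (1/T)" by (simp add: algebra_simps)
        moreover have "- m * (1/T) = - (m * (1/T))" by simp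
        ultimately show ?thesis using rl by linarith
      qed
      ultimately show "f (q k) \<le> ereal (m + \<epsilon>)" by (meson order_trans ereal_less_eq(3))
    qed
  qed
  show "f (xb + d) \<le> ereal m + ereal \<epsilon>"
  proof (rule ccontr)
    assume "\<not> ?thesis"
    hence "ereal (m + \<epsilon>) < f (xb + d)" by simp
    from lsc_ev[OF lf ql this] have "eventually (\<lambda>k. \<not> f (q k) \<le> ereal (m + \<epsilon>)) sequentially"
      by (auto elim: eventually_mono)
    thus False using fr2 by (simp add: frequently_def)
  qed
qed



lemma tiltle:
  assumes "tilt f u x \<le> tilt f u y" "f y = ereal b"
  shows "f x \<le> ereal (b + u \<bullet> (x - y))"
  using assms by (cases "f x") (auto simp: tilt_def inner_diff_right)

lemma ediv_le:
  assumes "fx \<le> ereal c" "t > 0"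
  shows "fx / ereal t \<le> ereal (c / t)"
  using assms by (cases fx) (auto simp: divide_right_mono)

lemma div_aux: "(t::real) > 0 \<Longrightarrow> (m + i * (t + n)) / t = m / t + i + i * (n / t)"
  by (simp add: field_simps)

lemma claimA:
  fixes f :: "'a::euclidean_space \<Rightarrow> ereal"
  assumes xb: "xb \<in> X" and m: "f xb = ereal m" and AK: "asym_cone X \<inter> Kf f = {0}"
  shows "\<exists>\<delta>>0. \<exists>R. \<forall>u x. norm u < \<delta> \<longrightarrow> x \<in> X \<longrightarrow> tilt f u x \<le> tilt f u xb \<longrightarrow> norm x \<le> R"
proof (rule ccontr)
  assume "\<not> ?thesis"
  hence "\<forall>k::nat. \<exists>u x. norm u < inverse (real (Suc k)) \<and> x \<in> X \<and> tilt f u x \<le> tilt f u xb \<and> norm x > real k"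
    by (metis not_le inverse_positive_iff_positive of_nat_0_less_iff zero_less_Suc)
  then obtain U Y where UY: "\<And>k. norm (U k) < inverse (real (Suc k))" "\<And>k. Y k \<in> X"
    "\<And>k. tilt f (U k) (Y k) \<le> tilt f (U k) xb" "\<And>k. norm (Y k) > real k"
    by metis
  define t where "t = (\<lambda>k. norm (Y k))"
  have tpos: "t k > 0" for k using UY(4)[of k] unfolding t_def by linarith
  define d where "d = (\<lambda>k. (1 / t k) *\<^sub>R Y k)"
  have "d k \<in> sphere 0 1" for k using tpos[of k] unfolding d_def t_def by simp
  then obtain dd r where dd: "dd \<in> sphere 0 1" "strict_mono r" "(d \<circ> r) \<longlonglongrightarrow> dd"
    using seq_compactE[OF compact_imp_seq_compact[OF compact_sphere]] by metis
  have tr: "filterlim (\<lambda>k. t (r k)) at_top sequentially"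
  proof (rule filterlim_at_top_mono[OF filterlim_real_sequentially])
    show "eventually (\<lambda>k. real k \<le> t (r k)) sequentially"
    proof (rule always_eventually, rule allI)
      fix k have "real k \<le> real (r k)" using seq_suble[OF dd(2)] by simp
      also have "\<dots> < t (r k)" using UY(4) unfolding t_def by simp
      finally show "real k \<le> t (r k)" by simp
    qed
  qed
  have dlim: "(\<lambda>k. d (r k)) \<longlonglongrightarrow> dd" using dd(3) by (simp add: comp_def)
  have "dd \<in> asym_cone X" unfolding asym_cone_def
    using tr UY(2) dlim unfolding d_def
    by (intro CollectI exI[of _ "\<lambda>k. t (r k)"] exI[of _ "\<lambda>k. Y (r k)"]) auto
  moreover have "dd \<in> Kf f"
  proof -
    define B where "B = (\<lambda>k. (\<bar>m\<bar> + norm xb) * inverse (t k) + inverse (real (Suc k)))"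
    have bound: "f (Y k) / ereal (t k) \<le> ereal (B k)" for k
    proof -
      have "f (Y k) \<le> ereal (m + U k \<bullet> (Y k - xb))" using tiltle[OF UY(3) m] .
      moreover have "U k \<bullet> (Y k - xb) \<le> inverse (real (Suc k)) * (t k + norm xb)"
      proof -
        have "U k \<bullet> (Y k - xb) \<le> norm (U k) * norm (Y k - xb)"
          by (rule order_trans[OF abs_ge_self Cauchy_Schwarz_ineq2])
        also have "\<dots> \<le> inverse (real (Suc k)) * (t k + norm xb)"
          using UY(1)[of k] norm_triangle_ineq4[of "Y k" xb] unfolding t_def
          by (intro mult_mono) auto
        finally show ?thesis .
      qed
      ultimately have "f (Y k) \<le> ereal (m + inverse (real (Suc k)) * (t k + norm xb))"
        by (meson order_trans ereal_less_eq(3) add_left_mono)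
      hence "f (Y k) / ereal (t k) \<le> ereal ((m + inverse (real (Suc k)) * (t k + norm xb)) / t k)"
        using tpos by (intro ediv_le) auto
      also have "(m + inverse (real (Suc k)) * (t k + norm xb)) / t k \<le> B k"
      proof -
        have "(m + inverse (real (Suc k)) * (t k + norm xb)) / t k
             = m / t k + inverse (real (Suc k)) + inverse (real (Suc k)) * (norm xb / t k)"
          using tpos[of k] by (rule div_aux)
        moreover have "m / t k \<le> \<bar>m\<bar> * inverse (t k)"
          using tpos[of k] by (simp add: divide_inverse mult_right_mono)
        moreover have "inverse (real (Suc k)) * (norm xb / t k) \<le> 1 * (norm xb / t k)"
          using tpos[of k] by (intro mult_right_mono) (auto simp: inverse_le_1_iff)
        moreover have "norm xb / t k = norm xb * inverse (t k)" by (simp add: divide_inverse)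
        ultimately show ?thesis unfolding B_def by (simp add: algebra_simps)
      qed
      finally show ?thesis by simp
    qed
    have Blim: "(\<lambda>k. B (r k)) \<longlonglongrightarrow> 0"
    proof -
      have "(\<lambda>k. inverse (t (r k))) \<longlonglongrightarrow> 0" by (rule tendsto_inverse_0_at_top[OF tr])
      moreover have "(\<lambda>k. inverse (real (Suc (r k)))) \<longlonglongrightarrow> 0"
        using LIMSEQ_subseq_LIMSEQ[OF LIMSEQ_inverse_real_of_nat dd(2)] by (simp add: comp_def)
      ultimately have "(\<lambda>k. B (r k)) \<longlonglongrightarrow> (\<bar>m\<bar> + norm xb) * 0 + 0"
        unfolding B_def by (intro tendsto_intros)
      thus ?thesis by simp
    qed
    have "liminf (\<lambda>k. f (t (r k) *\<^sub>R d (r k)) / ereal (t (r k))) \<le> liminf (\<lambda>k. ereal (B (r k)))"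
    proof (rule Liminf_mono, rule always_eventually, rule allI)
      fix k
      have "t (r k) *\<^sub>R d (r k) = Y (r k)" using tpos[of "r k"] unfolding d_def by simp
      thus "f (t (r k) *\<^sub>R d (r k)) / ereal (t (r k)) \<le> ereal (B (r k))" using bound[of "r k"] by simp
    qed
    also have "liminf (\<lambda>k. ereal (B (r k))) = 0"
      using lim_imp_Liminf[OF _ tendsto_ereal[OF Blim]] by (simp add: zero_ereal_def)
    finally have L: "liminf (\<lambda>k. f (t (r k) *\<^sub>R d (r k)) / ereal (t (r k))) \<le> 0" .
    have "asym_fun f dd \<le> 0" unfolding asym_fun_def
      using tr dlim L
      by (intro Inf_lower2[of "liminf (\<lambda>k. f (t (r k) *\<^sub>R d (r k)) / ereal (t (r k)))"])
         (auto intro!: exI[of _ "\<lambda>k. t (r k)"] exI[of _ "\<lambda>k. d (r k)"])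
    thus ?thesis by (simp add: Kf_def)
  qed
  ultimately have "dd \<in> {0}" using AK by blast
  thus False using dd(1) by simp
qed


lemma part1:
  fixes f :: "'a::euclidean_space \<Rightarrow> ereal"
  assumes pf: "proper_fun f" and lf: "lsc_fun f" and cX: "closed X"
    and ub: "\<not> bounded (edom f \<inter> X)"
    and S0: "Sol f X 0 = {xb}" and AK: "asym_cone X \<inter> Kf f = {0}"
  shows "lsc_setmap (Sol f X) 0"
proof -
  have xbS: "xb \<in> Sol f X 0" using S0 by simp
  obtain m where m: "f xb = ereal m" using sol0_props(1)[OF pf ub xbS] by blast
  have xbX: "xb \<in> X" using sol0_props(2)[OF pf ub xbS] .
  have fmin: "\<forall>y\<in>X. f xb \<le> f y" using sol0_props(3)[OF pf ub xbS] .
  have fne: "\<forall>x. f x \<noteq> -\<infinity>" using pf by (simp add: proper_fun_def)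
  obtain \<delta> R where dp: "\<delta> > 0" and
    bnd: "\<And>u x. norm u < \<delta> \<Longrightarrow> x \<in> X \<Longrightarrow> tilt f u x \<le> tilt f u xb \<Longrightarrow> norm x \<le> R"
    using claimA[OF xbX m AK] by blast
  have solB: "Sol f X u \<subseteq> cball 0 R" if "norm u < \<delta>" for u
    using bnd[OF that] xbX by (auto simp: Sol_def)
  have solNE: "Sol f X u \<noteq> {}" if u: "norm u < \<delta>" for u
  proof -
    let ?K = "cball 0 R \<inter> X"
    have "compact ?K" using cX by (intro compact_Int_closed) auto
    moreover have "xb \<in> ?K" using bnd[OF u xbX] xbX by auto
    moreover have "\<And>a z. a < tilt f u z \<Longrightarrow> eventually (\<lambda>y. a < tilt f u y) (nhds z)"
      using lsc_tilt_ev[OF lf fne filterlim_ident] by blast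
    ultimately obtain z where z: "z \<in> ?K" "\<forall>y\<in>?K. tilt f u z \<le> tilt f u y"
      using lsc_min_exists[of ?K "tilt f u"] by blast
    have "z \<in> Sol f X u" unfolding Sol_def
    proof (intro CollectI conjI ballI)
      show "z \<in> X" using z by auto
      fix y assume y: "y \<in> X"
      show "tilt f u z \<le> tilt f u y"
      proof (cases "norm y \<le> R")
        case True thus ?thesis using z y by auto
      next
        case False
        hence "\<not> tilt f u y \<le> tilt f u xb" using bnd[OF u y] by auto
        moreover have "tilt f u z \<le> tilt f u xb" using z \<open>xb \<in> ?K\<close> by blast
        ultimately show ?thesis by simp
      qed
    qed
    thus ?thesis by blast
  qed
  show ?thesis unfolding lsc_setmap_def
  proof (intro conjI allI impI)
    show "Sol f X 0 \<noteq> {}" using S0 by simp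
    fix V :: "'a set" assume V: "open V \<and> Sol f X 0 \<inter> V \<noteq> {}"
    hence xbV: "xb \<in> V" using S0 by auto
    show "\<exists>U. open U \<and> 0 \<in> U \<and> (\<forall>u\<in>U. Sol f X u \<inter> V \<noteq> {})"
    proof (rule ccontr)
      assume H: "\<not> ?thesis"
      have "\<forall>k::nat. \<exists>u. norm u < min \<delta> (inverse (real (Suc k))) \<and> Sol f X u \<inter> V = {}"
      proof
        fix k :: nat
        have "0 < min \<delta> (inverse (real (Suc k)))" using dp by simp
        hence "open (ball 0 (min \<delta> (inverse (real (Suc k))))) \<and> (0::'a) \<in> ball 0 (min \<delta> (inverse (real (Suc k))))"
          by simp
        then obtain u where "u \<in> ball 0 (min \<delta> (inverse (real (Suc k))))" "Sol f X u \<inter> V = {}"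
          using H by blast
        thus "\<exists>u. norm u < min \<delta> (inverse (real (Suc k))) \<and> Sol f X u \<inter> V = {}" by auto
      qed
      then obtain U where U: "\<And>k. norm (U k) < min \<delta> (inverse (real (Suc k)))"
        "\<And>k. Sol f X (U k) \<inter> V = {}" by metis
      have "\<forall>k. \<exists>z. z \<in> Sol f X (U k)" using solNE U(1) by fastforce
      then obtain Z where Z: "\<And>k. Z k \<in> Sol f X (U k)" by metis
      let ?K = "(cball 0 R \<inter> X) \<inter> (- V)"
      have cK: "compact ?K" using cX V by (intro compact_Int_closed) auto
      have ZK: "\<forall>k. Z k \<in> ?K"
      proof
        fix k
        have "norm (U k) < \<delta>" using U(1)[of k] by simp
        hence "Z k \<in> cball 0 R" using solB Z[of k] by blast
        moreover have "Z k \<in> X" using Z[of k] by (simp add: Sol_def)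
        moreover have "Z k \<notin> V" using Z[of k] U(2)[of k] by blast
        ultimately show "Z k \<in> ?K" by simp
      qed
      obtain z r where zr: "z \<in> ?K" "strict_mono r" "(Z \<circ> r) \<longlonglongrightarrow> z"
        using seq_compactE[OF compact_imp_seq_compact[OF cK] ZK] by metis
      have Zl: "(\<lambda>k. Z (r k)) \<longlonglongrightarrow> z" using zr(3) by (simp add: comp_def)
      have U0: "U \<longlonglongrightarrow> 0"
      proof (rule tendsto_norm_zero_cancel, rule tendsto_sandwich[OF _ _ tendsto_const LIMSEQ_inverse_real_of_nat])
        show "eventually (\<lambda>k. 0 \<le> norm (U k)) sequentially" by simp
        show "eventually (\<lambda>k. norm (U k) \<le> inverse (real (Suc k))) sequentially"
          using U(1) by (auto intro: always_eventually less_imp_le)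
      qed
      have Ur: "(\<lambda>k. U (r k)) \<longlonglongrightarrow> 0"
        using LIMSEQ_subseq_LIMSEQ[OF U0 zr(2)] by (simp add: comp_def)
      have "z \<in> Sol f X 0" unfolding Sol_def
      proof (intro CollectI conjI ballI)
        show "z \<in> X" using zr(1) by auto
        fix y assume y: "y \<in> X"
        show "tilt f 0 z \<le> tilt f 0 y"
        proof (cases "f y")
          case PInf thus ?thesis by simp
        next
          case MInf thus ?thesis using fne by simp
        next
          case (real b)
          show ?thesis
          proof (rule ccontr)
            assume "\<not> ?thesis"
            hence "ereal b < f z" using real by simp
            then obtain s where s1: "b < s" and s2: "ereal s < f z"
              by (metis ereal_dense2 ereal_less(2) order_less_trans less_ereal.simps(1))
            have e1: "eventually (\<lambda>k. ereal s < f (Z (r k))) sequentially"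
              using lsc_ev[OF lf Zl s2] .
            have "(\<lambda>k. b + U (r k) \<bullet> (Z (r k) - y)) \<longlonglongrightarrow> b + 0 \<bullet> (z - y)"
              by (intro tendsto_intros Ur Zl)
            hence e2: "eventually (\<lambda>k. b + U (r k) \<bullet> (Z (r k) - y) < s) sequentially"
              using s1 by (intro order_tendstoD) auto
            have e3: "eventually (\<lambda>k. f (Z (r k)) \<le> ereal (b + U (r k) \<bullet> (Z (r k) - y))) sequentially"
            proof (rule always_eventually, rule allI)
              fix k
              have "tilt f (U (r k)) (Z (r k)) \<le> tilt f (U (r k)) y"
                using Z[of "r k"] y by (auto simp: Sol_def)
              thus "f (Z (r k)) \<le> ereal (b + U (r k) \<bullet> (Z (r k) - y))"
                using tiltle real by blast
            qed
            have "eventually (\<lambda>k. False) sequentially"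
              using e1 e2 e3
            proof eventually_elim
              case (elim k)
              hence "ereal s < ereal (b + U (r k) \<bullet> (Z (r k) - y))" by (meson order_less_le_trans)
              thus False using elim(2) by simp
            qed
            thus False by simp
          qed
        qed
      qed
      hence "z = xb" using S0 by simp
      thus False using zr(1) xbV by auto
    qed
  qed
qed

theorem mainTheorem7:
  fixes f :: "'a::euclidean_space \<Rightarrow> ereal" and X :: "'a set"
  assumes "proper_fun f" and "lsc_fun f"
    and "closed X" and "X \<noteq> {}" and "\<not> bounded (edom f \<inter> X)"
  shows "((\<exists>x. Sol f X 0 = {x}) \<and> asym_cone X \<inter> Kf f = {0} \<longrightarrow> lsc_setmap (Sol f X) 0)
       \<and> (lsc_setmap (Sol f X) 0 \<longrightarrow> (\<exists>x. Sol f X 0 = {x}))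
       \<and> (lsc_setmap (Sol f X) 0 \<and> convex X \<and> convex_efun f \<longrightarrow> asym_cone X \<inter> Kf f = {0})"
proof (intro conjI impI)
  assume "(\<exists>x. Sol f X 0 = {x}) \<and> asym_cone X \<inter> Kf f = {0}"
  thus "lsc_setmap (Sol f X) 0" using part1[OF assms(1,2,3,5)] by blast
next
  assume "lsc_setmap (Sol f X) 0"
  thus "\<exists>x. Sol f X 0 = {x}" using part2[OF assms(1,5)] by blast
next
  assume H: "lsc_setmap (Sol f X) 0 \<and> convex X \<and> convex_efun f"
  then obtain xb where S0: "Sol f X 0 = {xb}" using part2[OF assms(1,5)] by blast
  have xbS: "xb \<in> Sol f X 0" using S0 by simp
  obtain m where m: "f xb = ereal m" using sol0_props(1)[OF assms(1,5) xbS] by blast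
  have xbX: "xb \<in> X" using sol0_props(2)[OF assms(1,5) xbS] .
  have fmin: "\<forall>y\<in>X. f xb \<le> f y" using sol0_props(3)[OF assms(1,5) xbS] .
  show "asym_cone X \<inter> Kf f = {0}"
  proof
    show "{0} \<subseteq> asym_cone X \<inter> Kf f" using zero_asym[OF assms(4)] zero_Kf[OF assms(1)] by auto
    show "asym_cone X \<inter> Kf f \<subseteq> {0}"
    proof
      fix d assume d: "d \<in> asym_cone X \<inter> Kf f"
      have X1: "xb + d \<in> X" using rec_X[of X xb d] H assms(3) xbX d by blast
      have f1: "f (xb + d) \<le> ereal m" using rec_f[of f xb m d] H assms(1,2) m d by blast
      have "xb + d \<in> Sol f X 0" unfolding Sol_def
        using X1 f1 fmin m by (auto intro: order_trans)
      thus "d \<in> {0}" using S0 by simp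
    qed
  qed
qed

end
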